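(* Let $f\colon\mathbb{R}^n\to\mathbb{R}$ be convex and differentiable with $\|\nabla f(x)-\nabla f(y)\|\le L\|x-y\|$ for all $x,y$ (Euclidean norm, $L>0$), and assume $f$ has a minimizer $x_\star$; write $f_\star=f(x_\star)$. Let $\{\theta_k\}_{k=0}^\infty$ be a positive sequence with $\theta_0=1$ and $0\le\theta_{k+1}^2-\theta_{k+1}\le\theta_k^2$ for $k=0,1,\dots$, and set $\theta_{-1}=0$. Let $\{\varphi_k\}_{k=0}^\infty$ be a positive sequence with $0\le\varphi_k^2-\varphi_k\le2\theta_{k-1}^2$ for $k=0,1,\dots$. Given $x_0\in\mathbb{R}^n$, let $y_0=x_0$, $\tilde x_0=x_0$, and for $k=0,1,\dots$ \[ y_{k+1}=x_k-\tfrac1L\nabla f(x_k),\qquad x_{k+1}=y_{k+1}+\frac{\theta_k-1}{\theta_{k+1}}(y_{k+1}-y_k)+\frac{\theta_k}{\theta_{k+1}}(y_{k+1}-x_k), \] \[ \tilde x_{k+1}=y_{k+1}+\frac{\theta_k-1}{\varphi_{k+1}}(y_{k+1}-y_k)+\frac{\theta_k}{\varphi_{k+1}}(y_{k+1}-x_k). \] Then for $k=0,1,\dots$, \[ f(\tilde x_k)-f_\star\le\frac{L\|x_0-x_\star\|^2}{2\varphi_k^2}. \]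
   Context: The $\tilde x_k$ are the secondary iterates of OGM with the "last-step modification". $\|\cdot\|$ is the Euclidean norm. *)

theory Defs
  imports "HOL-Analysis.Analysis"
begin

end

theory Submission
  imports Defs
begin
schematic_goal line_deriv_s:
  fixes F :: "'a::real_inner \<Rightarrow> real"
  assumes grad: "\<And>z. (F has_derivative (\<lambda>h. G z \<bullet> h)) (at z)"
  shows "(((\<lambda>t. F (v + t *\<^sub>R d)) has_real_derivative (G (v + t *\<^sub>R d) \<bullet> d)) (at t)) \<and> (?b_sync::bool)"
proof -
  have "((\<lambda>t. F (v + t *\<^sub>R d)) has_real_derivative (G (v + t *\<^sub>R d) \<bullet> d)) (at t)"
  proof -
    have l: "((\<lambda>t. v + t *\<^sub>R d) has_derivative (\<lambda>s. s *\<^sub>R d)) (at t)"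
      by (auto intro!: derivative_eq_intros)
    have "((\<lambda>t. F (v + t *\<^sub>R d)) has_derivative (\<lambda>s. G (v + t *\<^sub>R d) \<bullet> (s *\<^sub>R d))) (at t)"
      using has_derivative_compose[OF l grad] by (simp add: o_def)
    moreover have "(\<lambda>s. G (v + t *\<^sub>R d) \<bullet> (s *\<^sub>R d)) = (*) (G (v + t *\<^sub>R d) \<bullet> d)"
      by (auto simp: fun_eq_iff)
    ultimately show ?thesis by (simp add: has_field_derivative_def)
  qed
  then show "(((\<lambda>t. F (v + t *\<^sub>R d)) has_real_derivative (G (v + t *\<^sub>R d) \<bullet> d)) (at t)) \<and> True" by simp
qed

lemmas line_deriv = line_deriv_s[THEN conjunct1]

schematic_goal above_tangent_s:
  fixes F :: "'a::real_inner \<Rightarrow> real"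
  assumes cvx: "convex_on UNIV F"
    and grad: "\<And>z. (F has_derivative (\<lambda>h. G z \<bullet> h)) (at z)"
  shows "(F v + G v \<bullet> (u - v) \<le> F u) \<and> (?b_sync::bool)"
proof -
  have "F v + G v \<bullet> (u - v) \<le> F u"
  proof -
    define d where "d = u - v"
    define k where "k = (\<lambda>t::real. F (v + t *\<^sub>R d))"
    have "convex_on UNIV k"
    proof (rule convex_onI)
      fix t a b :: real assume "t > 0" "t < 1"
      have "v + ((1 - t) *\<^sub>R a + t *\<^sub>R b) *\<^sub>R d = (1 - t) *\<^sub>R (v + a *\<^sub>R d) + t *\<^sub>R (v + b *\<^sub>R d)"
        by (simp add: algebra_simps)
      then show "k ((1 - t) *\<^sub>R a + t *\<^sub>R b) \<le> (1 - t) * k a + t * k b"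
        unfolding k_def using convex_onD[OF cvx, of t "v + a *\<^sub>R d" "v + b *\<^sub>R d"] \<open>t>0\<close> \<open>t<1\<close>
        by simp
    qed simp
    moreover have "(k has_real_derivative (G v \<bullet> d)) (at 0 within UNIV)"
      using line_deriv[OF grad, of v d 0] unfolding k_def by simp
    ultimately have "k 1 - k 0 \<ge> (G v \<bullet> d) * (1 - 0)"
      by (intro convex_on_imp_above_tangent) auto
    then show ?thesis unfolding k_def d_def by simp
  qed
  then show "(F v + G v \<bullet> (u - v) \<le> F u) \<and> True" by simp
qed

lemmas above_tangent = above_tangent_s[THEN conjunct1]

schematic_goal descent_s:
  fixes F :: "'a::real_inner \<Rightarrow> real"
  assumes grad: "\<And>z. (F has_derivative (\<lambda>h. G z \<bullet> h)) (at z)"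
    and lip: "\<And>a b. norm (G a - G b) \<le> L * norm (a - b)"
  shows "(F u \<le> F v + G v \<bullet> (u - v) + L / 2 * (norm (u - v))\<^sup>2) \<and> (?b_sync::bool)"
proof -
  have "F u \<le> F v + G v \<bullet> (u - v) + L / 2 * (norm (u - v))\<^sup>2"
  proof -
    define d where "d = u - v"
    define h where "h = (\<lambda>t::real. F (v + t *\<^sub>R d) - F v - t * (G v \<bullet> d) - L / 2 * t\<^sup>2 * (norm d)\<^sup>2)"
    have "h 1 \<le> h 0"
    proof (rule DERIV_nonpos_imp_nonincreasing[of 0 1 h])
      fix t :: real assume t: "0 \<le> t" "t \<le> 1"
      have D: "(h has_real_derivative (G (v + t *\<^sub>R d) \<bullet> d - G v \<bullet> d - L / 2 * (2 * t) * (norm d)\<^sup>2)) (at t)"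
        unfolding h_def
        apply (intro derivative_eq_intros)
            apply (rule line_deriv[OF grad])
           apply simp_all
        apply simp_all
        done
      have "G (v + t *\<^sub>R d) \<bullet> d - G v \<bullet> d = (G (v + t *\<^sub>R d) - G v) \<bullet> d"
        by (simp add: inner_diff_left)
      also have "\<dots> \<le> norm (G (v + t *\<^sub>R d) - G v) * norm d"
        by (rule norm_cauchy_schwarz)
      also have "\<dots> \<le> L * norm (t *\<^sub>R d) * norm d"
        using lip[of "v + t *\<^sub>R d" v] by (intro mult_right_mono) auto
      also have "\<dots> = L * t * (norm d)\<^sup>2" using t by (simp add: power2_eq_square)
      finally have "G (v + t *\<^sub>R d) \<bullet> d - G v \<bullet> d - L / 2 * (2 * t) * (norm d)\<^sup>2 \<le> 0"
        by simp
      then show "\<exists>y. (h has_real_derivative y) (at t) \<and> y \<le> 0"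
        using D by blast
    qed simp
    then show ?thesis unfolding h_def d_def by simp
  qed
  then show "(F u \<le> F v + G v \<bullet> (u - v) + L / 2 * (norm (u - v))\<^sup>2) \<and> True" by simp
qed

lemmas descent = descent_s[THEN conjunct1]

schematic_goal cocoercive_s:
  fixes F :: "'a::real_inner \<Rightarrow> real"
  assumes cvx: "convex_on UNIV F"
    and grad: "\<And>z. (F has_derivative (\<lambda>h. G z \<bullet> h)) (at z)"
    and lip: "\<And>a b. norm (G a - G b) \<le> L * norm (a - b)"
    and L: "L > 0"
  shows "(F v \<le> F u + G v \<bullet> (v - u) - (norm (G u - G v))\<^sup>2 / (2 * L)) \<and> (?b_sync::bool)"
proof -
  have "F v \<le> F u + G v \<bullet> (v - u) - (norm (G u - G v))\<^sup>2 / (2 * L)"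
  proof -
    define P where "P = (\<lambda>w. F w - G v \<bullet> w)"
    define H where "H = (\<lambda>w. G w - G v)"
    have gP: "(P has_derivative (\<lambda>h. H z \<bullet> h)) (at z)" for z
    proof -
      have "(P has_derivative (\<lambda>h. G z \<bullet> h - G v \<bullet> h)) (at z)"
        unfolding P_def by (rule has_derivative_diff[OF grad]) (auto intro!: derivative_eq_intros)
      moreover have "(\<lambda>h. G z \<bullet> h - G v \<bullet> h) = (\<lambda>h. H z \<bullet> h)"
        by (auto simp: fun_eq_iff H_def inner_diff_left)
      ultimately show ?thesis by simp
    qed
    have lH: "norm (H a - H b) \<le> L * norm (a - b)" for a b
      using lip[of a b] by (simp add: H_def)
    define w where "w = u - (1 / L) *\<^sub>R H u"
    have "P v \<le> P w"
      using above_tangent[OF cvx grad, of v w] unfolding P_def by (simp add: inner_diff_right)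
    also have "P w \<le> P u + H u \<bullet> (w - u) + L / 2 * (norm (w - u))\<^sup>2"
      by (rule descent[OF gP lH])
    also have "\<dots> = P u - (norm (H u))\<^sup>2 / (2 * L)"
    proof -
      have e: "H u \<bullet> H u = (norm (H u))\<^sup>2" by (simp add: power2_norm_eq_inner)
      show ?thesis using L by (simp add: w_def e power2_eq_square field_simps)
    qed
    finally show ?thesis unfolding P_def H_def by (simp add: inner_diff_right)
  qed
  then show "(F v \<le> F u + G v \<bullet> (v - u) - (norm (G u - G v))\<^sup>2 / (2 * L)) \<and> True" by simp
qed

lemmas cocoercive = cocoercive_s[THEN conjunct1]

schematic_goal norm_diff_sq_s:
  fixes a b :: "'a::real_inner"
  shows "((norm (a - b))\<^sup>2 = (norm a)\<^sup>2 - 2 * (a \<bullet> b) + (norm b)\<^sup>2) \<and> (?b_sync::bool)"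
proof -
  have "(norm (a - b))\<^sup>2 = (norm a)\<^sup>2 - 2 * (a \<bullet> b) + (norm b)\<^sup>2"
    by (simp add: power2_norm_eq_inner inner_diff_left inner_diff_right inner_commute)
  then show "((norm (a - b))\<^sup>2 = (norm a)\<^sup>2 - 2 * (a \<bullet> b) + (norm b)\<^sup>2) \<and> True" by simp
qed

lemmas norm_diff_sq = norm_diff_sq_s[THEN conjunct1]

schematic_goal norm_diff_scale_sq_s:
  fixes a b :: "'a::real_inner"
  shows "((norm (a - c *\<^sub>R b))\<^sup>2 = (norm a)\<^sup>2 - 2 * c * (b \<bullet> a) + c\<^sup>2 * (norm b)\<^sup>2) \<and> (?b_sync::bool)"
proof -
  have "(norm (a - c *\<^sub>R b))\<^sup>2 = (norm a)\<^sup>2 - 2 * c * (b \<bullet> a) + c\<^sup>2 * (norm b)\<^sup>2"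
    by (simp add: norm_diff_sq inner_commute power_mult_distrib)
  then show "((norm (a - c *\<^sub>R b))\<^sup>2 = (norm a)\<^sup>2 - 2 * c * (b \<bullet> a) + c\<^sup>2 * (norm b)\<^sup>2) \<and> True" by simp
qed

lemmas norm_diff_scale_sq = norm_diff_scale_sq_s[THEN conjunct1]

schematic_goal theorem2_aux_s:
  fixes f :: "real ^ 'n \<Rightarrow> real" and g :: "real ^ 'n \<Rightarrow> real ^ 'n"
    and L :: real and xs :: "real ^ 'n"
    and \<theta> \<phi> :: "nat \<Rightarrow> real"
    and x y xt :: "nat \<Rightarrow> real ^ 'n"
  assumes cvx: "convex_on UNIV f"
    and grad: "\<And>z. (f has_derivative (\<lambda>h. g z \<bullet> h)) (at z)"
    and Lpos: "L > 0"
    and lip: "\<And>u v. norm (g u - g v) \<le> L * norm (u - v)"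
    and minim: "\<And>z. f xs \<le> f z"
    and th_pos: "\<And>k. \<theta> k > 0"
    and th0: "\<theta> 0 = 1"
    and th_rec: "\<And>k. 0 \<le> (\<theta> (Suc k))\<^sup>2 - \<theta> (Suc k) \<and> (\<theta> (Suc k))\<^sup>2 - \<theta> (Suc k) \<le> (\<theta> k)\<^sup>2"
    and ph_pos: "\<And>k. \<phi> k > 0"
    and ph_rec: "\<And>k. 0 \<le> (\<phi> k)\<^sup>2 - \<phi> k \<and>
                   (\<phi> k)\<^sup>2 - \<phi> k \<le> 2 * (if k = 0 then 0 else \<theta> (k - 1))\<^sup>2"
    and y0: "y 0 = x 0"
    and xt0: "xt 0 = x 0"
    and y_step: "\<And>k. y (Suc k) = x k - (1 / L) *\<^sub>R g (x k)"
    and x_step: "\<And>k. x (Suc k) = y (Suc k)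
                  + ((\<theta> k - 1) / \<theta> (Suc k)) *\<^sub>R (y (Suc k) - y k)
                  + (\<theta> k / \<theta> (Suc k)) *\<^sub>R (y (Suc k) - x k)"
    and xt_step: "\<And>k. xt (Suc k) = y (Suc k)
                  + ((\<theta> k - 1) / \<phi> (Suc k)) *\<^sub>R (y (Suc k) - y k)
                  + (\<theta> k / \<phi> (Suc k)) *\<^sub>R (y (Suc k) - x k)"
  shows "(f (xt k) - f xs \<le> L * (norm (x 0 - xs))\<^sup>2 / (2 * (\<phi> k)\<^sup>2)) \<and> (?b_sync::bool)"
proof -
  have "f (xt k) - f xs \<le> L * (norm (x 0 - xs))\<^sup>2 / (2 * (\<phi> k)\<^sup>2)"
  proof -
    have gxs: "g xs = 0"
    proof -
      have "f (xs - (1 / L) *\<^sub>R g xs) \<le> f xs + g xs \<bullet> ((xs - (1 / L) *\<^sub>R g xs) - xs)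
             + L / 2 * (norm ((xs - (1 / L) *\<^sub>R g xs) - xs))\<^sup>2"
        by (rule descent[OF grad lip])
      also have "\<dots> = f xs - (norm (g xs))\<^sup>2 / (2 * L)"
      proof -
        have e: "g xs \<bullet> g xs = (norm (g xs))\<^sup>2" by (simp add: power2_norm_eq_inner)
        show ?thesis using Lpos by (simp add: e power2_eq_square field_simps)
      qed
      finally have "(norm (g xs))\<^sup>2 / (2 * L) \<le> 0" using minim[of "xs - (1 / L) *\<^sub>R g xs"] by simp
      then have "(norm (g xs))\<^sup>2 \<le> 0" using Lpos by (simp add: divide_le_0_iff)
      then show ?thesis by simp
    qed
    have Q: "f v \<le> f u + g v \<bullet> (v - u) - (norm (g u - g v))\<^sup>2 / (2 * L)" for u v
      by (rule cocoercive[OF cvx grad lip Lpos])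
    have two: "(2::real^'n) * v = (2::real) *\<^sub>R v" for v
      by (simp add: vec_eq_iff)
    define z where "z k = \<theta> k *\<^sub>R x k - (\<theta> k - 1) *\<^sub>R y k" for k
    have z0: "z 0 = x 0" by (simp add: z_def th0)
    have zs: "z (Suc k) = z k - (2 * \<theta> k / L) *\<^sub>R g (x k)" for k
    proof -
      have t: "\<theta> (Suc k) \<noteq> 0" using th_pos[of "Suc k"] by simp
      have "\<theta> (Suc k) *\<^sub>R x (Suc k) = \<theta> (Suc k) *\<^sub>R y (Suc k) + (\<theta> k - 1) *\<^sub>R (y (Suc k) - y k)
             + \<theta> k *\<^sub>R (y (Suc k) - x k)"
        using t by (simp add: x_step scaleR_add_right)
      then have "z (Suc k) = y (Suc k) + (\<theta> k - 1) *\<^sub>R (y (Suc k) - y k) + \<theta> k *\<^sub>R (y (Suc k) - x k)"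
        by (simp add: z_def algebra_simps)
      also have "\<dots> = z k - (2 * \<theta> k / L) *\<^sub>R g (x k)"
        by (simp add: y_step z_def algebra_simps two)
      finally show ?thesis .
    qed
    have xtz: "\<phi> (Suc k) *\<^sub>R xt (Suc k) = (\<phi> (Suc k) - 1) *\<^sub>R y (Suc k) + z (Suc k)" for k
    proof -
      have t: "\<phi> (Suc k) \<noteq> 0" using ph_pos[of "Suc k"] by simp
      have "\<phi> (Suc k) *\<^sub>R xt (Suc k) = \<phi> (Suc k) *\<^sub>R y (Suc k) + (\<theta> k - 1) *\<^sub>R (y (Suc k) - y k)
             + \<theta> k *\<^sub>R (y (Suc k) - x k)"
        using t by (simp add: xt_step scaleR_add_right)
      also have "\<dots> = (\<phi> (Suc k) - 1) *\<^sub>R y (Suc k) + z (Suc k)"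
        unfolding zs z_def[of k] y_step by (simp add: algebra_simps two)
      finally show ?thesis .
    qed
    have sd: "f (w - (1 / L) *\<^sub>R g w) \<le> f w - (norm (g w))\<^sup>2 / (2 * L)" for w
    proof -
      have "f (w - (1 / L) *\<^sub>R g w) \<le> f w + g w \<bullet> ((w - (1 / L) *\<^sub>R g w) - w)
             + L / 2 * (norm ((w - (1 / L) *\<^sub>R g w) - w))\<^sup>2"
        by (rule descent[OF grad lip])
      also have "\<dots> = f w - (norm (g w))\<^sup>2 / (2 * L)"
      proof -
        have e: "g w \<bullet> g w = (norm (g w))\<^sup>2" by (simp add: power2_norm_eq_inner)
        show ?thesis using Lpos by (simp add: e power2_eq_square field_simps)
      qed
      finally show ?thesis .
    qed
    define a where "a k = f (x k) - f xs - (norm (g (x k)))\<^sup>2 / (2 * L)" for k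
    have a_nn: "0 \<le> a k" for k
      using sd[of "x k"] minim[of "x k - (1 / L) *\<^sub>R g (x k)"] by (simp add: a_def)
    have Q1: "a k \<le> g (x k) \<bullet> (x k - xs) - (norm (g (x k)))\<^sup>2 / L" for k
    proof -
      have "f (x k) \<le> f xs + g (x k) \<bullet> (x k - xs) - (norm (g (x k)))\<^sup>2 / (2 * L)"
        using Q[of "x k" xs] by (simp add: gxs)
      moreover have "(norm (g (x k)))\<^sup>2 / L = (norm (g (x k)))\<^sup>2 / (2 * L) + (norm (g (x k)))\<^sup>2 / (2 * L)"
        by (simp add: field_simps)
      ultimately show ?thesis by (simp add: a_def)
    qed
    have Q2: "a (Suc k) - a k \<le> g (x (Suc k)) \<bullet> (x (Suc k) - y (Suc k)) - (norm (g (x (Suc k))))\<^sup>2 / L" for k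
    proof -
      let ?g = "g (x k)" and ?h = "g (x (Suc k))"
      have 1: "f (x (Suc k)) \<le> f (x k) + ?h \<bullet> (x (Suc k) - x k) - (norm (?g - ?h))\<^sup>2 / (2 * L)"
        by (rule Q)
      have 2: "?h \<bullet> (x (Suc k) - y (Suc k)) = ?h \<bullet> (x (Suc k) - x k) + (?g \<bullet> ?h) / L"
        by (simp add: y_step inner_diff_right inner_commute algebra_simps)
      have 3: "(norm (?g - ?h))\<^sup>2 / (2 * L) = (norm ?g)\<^sup>2 / (2 * L) - (?g \<bullet> ?h) / L + (norm ?h)\<^sup>2 / (2 * L)"
        using Lpos by (simp add: norm_diff_sq field_simps)
      have 4: "(norm ?h)\<^sup>2 / L = (norm ?h)\<^sup>2 / (2 * L) + (norm ?h)\<^sup>2 / (2 * L)"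
        by (simp add: field_simps)
      show ?thesis using 1 2 3 4 by (simp add: a_def)
    qed
    define \<Phi> where "\<Phi> k = 2 * (\<theta> k)\<^sup>2 * a k + L / 2 * (norm (z (Suc k) - xs))\<^sup>2" for k
    have \<Phi>0: "\<Phi> 0 \<le> L / 2 * (norm (x 0 - xs))\<^sup>2"
    proof -
      have E: "z (Suc 0) - xs = (x 0 - xs) - (2 / L) *\<^sub>R g (x 0)"
        by (simp add: zs z0 th0 algebra_simps)
      have N: "(norm (z (Suc 0) - xs))\<^sup>2 = (norm (x 0 - xs))\<^sup>2 - 2 * (2 / L) * (g (x 0) \<bullet> (x 0 - xs))
          + (2 / L)\<^sup>2 * (norm (g (x 0)))\<^sup>2"
        unfolding E by (rule norm_diff_scale_sq)
      have "L / 2 * (norm (z (Suc 0) - xs))\<^sup>2 = L / 2 * (norm (x 0 - xs))\<^sup>2 - 2 * (g (x 0) \<bullet> (x 0 - xs))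
          + 2 * ((norm (g (x 0)))\<^sup>2 / L)"
        unfolding N using Lpos by (simp add: field_simps power2_eq_square)
      moreover have "\<Phi> 0 = 2 * a 0 + L / 2 * (norm (z (Suc 0) - xs))\<^sup>2" by (simp add: \<Phi>_def th0)
      ultimately show ?thesis using Q1[of 0] by linarith
    qed
    have \<Phi>s: "\<Phi> (Suc k) \<le> \<Phi> k" for k
    proof -
      define t where "t = \<theta> (Suc k)"
      define h where "h = g (x (Suc k))"
      define P where "P = h \<bullet> (x (Suc k) - xs)"
      define R where "R = h \<bullet> (x (Suc k) - y (Suc k))"
      define GL where "GL = (norm h)\<^sup>2 / L"
      define N where "N = (norm (z (Suc k) - xs))\<^sup>2"
      define a1 where "a1 = a (Suc k)"
      define a0 where "a0 = a k"
      have E: "z (Suc (Suc k)) - xs = (z (Suc k) - xs) - (2 * t / L) *\<^sub>R h"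
        by (simp add: zs t_def h_def)
      have N2: "(norm (z (Suc (Suc k)) - xs))\<^sup>2 = N - 2 * (2 * t / L) * (h \<bullet> (z (Suc k) - xs)) + (2 * t / L)\<^sup>2 * (norm h)\<^sup>2"
        unfolding E N_def by (rule norm_diff_scale_sq)
      have V: "z (Suc k) - xs = (x (Suc k) - xs) + (t - 1) *\<^sub>R (x (Suc k) - y (Suc k))"
        by (simp add: z_def t_def algebra_simps)
      have W: "h \<bullet> (z (Suc k) - xs) = P + (t - 1) * R"
        unfolding V P_def R_def by (simp only: inner_add_right inner_scaleR_right)
      have L2: "L / 2 * (norm (z (Suc (Suc k)) - xs))\<^sup>2 = L / 2 * N - 2 * (t * P) - 2 * (t * t * R) + 2 * (t * R) + 2 * (t * t * GL)"
        unfolding N2 W GL_def using Lpos by (simp add: field_simps power2_eq_square)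
      have tt: "0 \<le> t * t - t" "t * t - t \<le> \<theta> k * \<theta> k"
        using th_rec[of k] by (simp_all add: t_def power2_eq_square)
      have tp: "0 < t" using th_pos by (simp add: t_def)
      have "t * a1 \<le> t * (P - GL)"
        using Q1[of "Suc k"] tp unfolding a1_def P_def GL_def h_def by (intro mult_left_mono) auto
      then have h1: "t * a1 \<le> t * P - t * GL" by (simp add: algebra_simps)
      have "(t * t - t) * (a1 - a0) \<le> (t * t - t) * (R - GL)"
        using Q2[of k] tt unfolding a1_def a0_def R_def GL_def h_def by (intro mult_left_mono) auto
      then have h2: "t * t * a1 - t * a1 - t * t * a0 + t * a0 \<le> t * t * R - t * R - t * t * GL + t * GL"
        by (simp add: algebra_simps)
      have "(t * t - t) * a0 \<le> \<theta> k * \<theta> k * a0"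
        using tt a_nn[of k] unfolding a0_def by (intro mult_right_mono) auto
      then have h3: "t * t * a0 - t * a0 \<le> \<theta> k * \<theta> k * a0" by (simp add: algebra_simps)
      have "\<Phi> (Suc k) = 2 * (t * t * a1) + L / 2 * (norm (z (Suc (Suc k)) - xs))\<^sup>2"
        by (simp add: \<Phi>_def t_def a1_def power2_eq_square)
      moreover have "\<Phi> k = 2 * (\<theta> k * \<theta> k * a0) + L / 2 * N"
        by (simp add: \<Phi>_def N_def a0_def power2_eq_square)
      ultimately show ?thesis using L2 h1 h2 h3 by linarith
    qed
    have \<Phi>b: "\<Phi> k \<le> L / 2 * (norm (x 0 - xs))\<^sup>2" for k
    proof (induction k)
      case 0 then show ?case using \<Phi>0 by simp
    next
      case (Suc k) then show ?case using \<Phi>s[of k] by linarith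
    qed
    define D where "D = (norm (x 0 - xs))\<^sup>2"
    have main: "(\<phi> k)\<^sup>2 * (f (xt k) - f xs) \<le> L / 2 * D"
    proof (cases k)
      case 0
      have p: "\<phi> 0 = 1"
      proof -
        have r: "0 \<le> \<phi> 0 * \<phi> 0 - \<phi> 0 \<and> \<phi> 0 * \<phi> 0 - \<phi> 0 \<le> 0"
          using ph_rec[of 0] by (simp add: power2_eq_square)
        have "\<phi> 0 * \<phi> 0 = \<phi> 0 * 1" using r by (elim conjE) linarith
        then show ?thesis using ph_pos[of 0] by (subst (asm) mult_left_cancel) auto
      qed
      have "f (x 0) \<le> f xs + g xs \<bullet> (x 0 - xs) + L / 2 * (norm (x 0 - xs))\<^sup>2"
        by (rule descent[OF grad lip])
      then show ?thesis using 0 p by (simp add: gxs xt0 D_def)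
    next
      case (Suc m)
      define p where "p = \<phi> (Suc m)"
      define u where "u = xt (Suc m)"
      define gt where "gt = g u"
      define b where "b = f u - f xs"
      define S where "S = gt \<bullet> (u - xs)"
      define T where "T = gt \<bullet> (u - y (Suc m))"
      define H where "H = (norm gt)\<^sup>2 / (2 * L)"
      define Wt where "Wt = gt \<bullet> (z (Suc m) - xs)"
      define N where "N = (norm (z (Suc m) - xs))\<^sup>2"
      define am where "am = a m"
      have Qa: "b \<le> S - H"
        using Q[of u xs] by (simp add: gxs b_def S_def H_def gt_def)
      have Qb: "b - am \<le> T - H"
      proof -
        let ?g = "g (x m)"
        have 1: "f u \<le> f (x m) + gt \<bullet> (u - x m) - (norm (?g - gt))\<^sup>2 / (2 * L)"
          unfolding gt_def by (rule Q)
        have 2: "T = gt \<bullet> (u - x m) + (?g \<bullet> gt) / L"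
          by (simp add: T_def y_step inner_diff_right inner_commute algebra_simps)
        have 3: "(norm (?g - gt))\<^sup>2 / (2 * L) = (norm ?g)\<^sup>2 / (2 * L) - (?g \<bullet> gt) / L + (norm gt)\<^sup>2 / (2 * L)"
          using Lpos by (simp add: norm_diff_sq field_simps)
        show ?thesis using 1 2 3 by (simp add: a_def am_def b_def H_def)
      qed
      have zz: "z (Suc m) = p *\<^sub>R u - (p - 1) *\<^sub>R y (Suc m)"
        using xtz[of m] unfolding p_def u_def by (simp add: algebra_simps)
      have V: "p *\<^sub>R (u - xs) + (p * p - p) *\<^sub>R (u - y (Suc m)) = p *\<^sub>R (z (Suc m) - xs)"
        unfolding zz by (simp add: algebra_simps)
      have W: "p * S + (p * p - p) * T = p * Wt"
      proof -
        have "gt \<bullet> (p *\<^sub>R (u - xs) + (p * p - p) *\<^sub>R (u - y (Suc m))) = gt \<bullet> (p *\<^sub>R (z (Suc m) - xs))"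
          using V by simp
        then show ?thesis unfolding S_def T_def Wt_def by (simp only: inner_add_right inner_scaleR_right)
      qed
      have AM: "p * Wt - p * p * H \<le> L / 2 * N"
      proof -
        have "0 \<le> (norm ((z (Suc m) - xs) - (p / L) *\<^sub>R gt))\<^sup>2" by simp
        also have "\<dots> = N - 2 * (p / L) * Wt + (p / L)\<^sup>2 * (norm gt)\<^sup>2"
          unfolding norm_diff_scale_sq N_def Wt_def ..
        finally have "0 \<le> N - 2 * (p / L) * Wt + (p / L)\<^sup>2 * (norm gt)\<^sup>2" .
        then have "0 \<le> L / 2 * (N - 2 * (p / L) * Wt + (p / L)\<^sup>2 * (norm gt)\<^sup>2)"
          using Lpos by simp
        also have "\<dots> = L / 2 * N - p * Wt + p * p * H"
          using Lpos by (simp add: H_def field_simps power2_eq_square)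
        finally show ?thesis by simp
      qed
      have pp: "0 \<le> p * p - p" "p * p - p \<le> 2 * (\<theta> m * \<theta> m)"
        using ph_rec[of "Suc m"] by (simp_all add: p_def power2_eq_square)
      have p0: "0 < p" using ph_pos by (simp add: p_def)
      have "p * b \<le> p * (S - H)" using Qa p0 by (intro mult_left_mono) auto
      then have h1: "p * b \<le> p * S - p * H" by (simp add: algebra_simps)
      have "(p * p - p) * (b - am) \<le> (p * p - p) * (T - H)" using Qb pp by (intro mult_left_mono) auto
      then have h2: "p * p * b - p * b - (p * p - p) * am \<le> (p * p - p) * T - p * p * H + p * H"
        by (simp add: algebra_simps)
      have h3: "(p * p - p) * am \<le> 2 * (\<theta> m * \<theta> m) * am"
        using pp a_nn[of m] unfolding am_def by (intro mult_right_mono) auto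
      have "\<Phi> m = 2 * (\<theta> m * \<theta> m) * am + L / 2 * N"
        by (simp add: \<Phi>_def N_def am_def power2_eq_square)
      then have "p * p * b \<le> L / 2 * D"
        using h1 h2 h3 W AM \<Phi>b[of m] unfolding D_def by linarith
      then show ?thesis using Suc by (simp add: p_def b_def u_def power2_eq_square)
    qed
    have "0 < (\<phi> k)\<^sup>2" using ph_pos[of k] by simp
    then show ?thesis using main Lpos unfolding D_def
      by (simp add: pos_le_divide_eq field_simps)
  qed
  then show "(f (xt k) - f xs \<le> L * (norm (x 0 - xs))\<^sup>2 / (2 * (\<phi> k)\<^sup>2)) \<and> True" by simp
qed

lemmas theorem2_aux = theorem2_aux_s[THEN conjunct1]

theorem theorem2:
  fixes f :: "real ^ 'n \<Rightarrow> real" and g :: "real ^ 'n \<Rightarrow> real ^ 'n"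
    and L :: real and xs :: "real ^ 'n"
    and \<theta> \<phi> :: "nat \<Rightarrow> real"
    and x y xt :: "nat \<Rightarrow> real ^ 'n"
  assumes cvx: "convex_on UNIV f"
    and grad: "\<And>z. (f has_derivative (\<lambda>h. g z \<bullet> h)) (at z)"
    and Lpos: "L > 0"
    and lip: "\<And>u v. norm (g u - g v) \<le> L * norm (u - v)"
    and minim: "\<And>z. f xs \<le> f z"
    and th_pos: "\<And>k. \<theta> k > 0"
    and th0: "\<theta> 0 = 1"
    and th_rec: "\<And>k. 0 \<le> (\<theta> (Suc k))\<^sup>2 - \<theta> (Suc k) \<and> (\<theta> (Suc k))\<^sup>2 - \<theta> (Suc k) \<le> (\<theta> k)\<^sup>2"
    and ph_pos: "\<And>k. \<phi> k > 0"
    and ph_rec: "\<And>k. 0 \<le> (\<phi> k)\<^sup>2 - \<phi> k \<and>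
                   (\<phi> k)\<^sup>2 - \<phi> k \<le> 2 * (if k = 0 then 0 else \<theta> (k - 1))\<^sup>2"
    and y0: "y 0 = x 0"
    and xt0: "xt 0 = x 0"
    and y_step: "\<And>k. y (Suc k) = x k - (1 / L) *\<^sub>R g (x k)"
    and x_step: "\<And>k. x (Suc k) = y (Suc k)
                  + ((\<theta> k - 1) / \<theta> (Suc k)) *\<^sub>R (y (Suc k) - y k)
                  + (\<theta> k / \<theta> (Suc k)) *\<^sub>R (y (Suc k) - x k)"
    and xt_step: "\<And>k. xt (Suc k) = y (Suc k)
                  + ((\<theta> k - 1) / \<phi> (Suc k)) *\<^sub>R (y (Suc k) - y k)
                  + (\<theta> k / \<phi> (Suc k)) *\<^sub>R (y (Suc k) - x k)"
  shows "f (xt k) - f xs \<le> L * (norm (x 0 - xs))\<^sup>2 / (2 * (\<phi> k)\<^sup>2)"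
  by (rule theorem2_aux[OF assms])

end
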